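(* Let $\Sigma$ be a finite alphabet and $\emptyset \subsetneq L \subsetneq \Sigma^*$. Then for all $n\ge 0$, $V_L(n) = \log |\psi_L(\Sigma^{\le n})|$.
   Context: $\log x$ denotes $\lfloor\log_2 x\rfloor$; $\Sigma^{\le n}$ is the set of words of length at most $n$. The Myhill–Nerode congruence: $x\sim_L y$ iff for all $z$, $xz\in L\iff yz\in L$. Define $\psi_L(a_1\cdots a_n)=[a_1\cdots a_n]_{\sim_L}[a_2\cdots a_n]_{\sim_L}\cdots[a_n]_{\sim_L}$, a word over the set of $\sim_L$-classes (with $\psi_L(\varepsilon)=\varepsilon$). Variable-size sliding window model: a streaming algorithm over an alphabet is a deterministic (possibly infinite-state) automaton with an injective encoding $\mathrm{enc}$ of states into bit strings, and $\mathrm{space}(\mathcal{A},w)=\max\{|\mathrm{enc}(\mathcal{A}(u))|:u\text{ prefix of }w\}$. Let $\overline\Sigma=\Sigma\cup\{\downarrow\}$ and $\mathrm{wnd}(\varepsilon)=\varepsilon$, $\mathrm{wnd}(ub)=\mathrm{wnd}(u)b$ for $b\in\Sigma$, $\mathrm{wnd}(u\!\downarrow)=\varepsilon$ if $\mathrm{wnd}(u)=\varepsilon$, $\mathrm{wnd}(u\!\downarrow)=v$ if $\mathrm{wnd}(u)=bv$. A variable-size sliding window algorithm for $L$ is a streaming algorithm over $\overline\Sigma$ accepting $\{w:\mathrm{wnd}(w)\in L\}$ with space complexity $v_\mathcal{A}(n)=\max\{\mathrm{space}(\mathcal{A},u):|\mathrm{wnd}(v)|\le n\text{ for all prefixes }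 v \text{ of } u\}$. $V_L(n)$ is the minimum of $v_\mathcal{A}(n)$ over all variable-size sliding window algorithms for $L$. *)

theory Defs
  imports Complex_Main "HOL-Library.Extended_Nat"
begin

definition mn_equiv :: "'a list set \<Rightarrow> 'a list \<Rightarrow> 'a list \<Rightarrow> bool" where
  "mn_equiv L x y \<longleftrightarrow> (\<forall>z. x @ z \<in> L \<longleftrightarrow> y @ z \<in> L)"

definition mn_class :: "'a list set \<Rightarrow> 'a list \<Rightarrow> 'a list set" where
  "mn_class L x = {y. mn_equiv L x y}"

definition psi :: "'a list set \<Rightarrow> 'a list \<Rightarrow> 'a list set list" where
  "psi L w = map (\<lambda>i. mn_class L (drop i w)) [0..<length w]"

definition log2floor :: "nat \<Rightarrow> nat" where
  "log2floor x = nat \<lfloor>log 2 (real x)\<rfloor>"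

record ('s, 'b) salg =
  init :: 's
  delta :: "'s \<Rightarrow> 'b \<Rightarrow> 's"
  acc :: "'s set"
  enc :: "'s \<Rightarrow> bool list"

definition run :: "('s, 'b) salg \<Rightarrow> 'b list \<Rightarrow> 's" where
  "run A u = foldl (delta A) (init A) u"

definition space :: "('s, 'b) salg \<Rightarrow> 'b list \<Rightarrow> nat" where
  "space A w = Max {length (enc A (run A (take i w))) | i. i \<le> length w}"

text \<open>None plays the role of the expiration symbol (down arrow).\<close>
fun wnd_step :: "'a list \<Rightarrow> 'a option \<Rightarrow> 'a list" where
  "wnd_step v (Some b) = v @ [b]"
| "wnd_step v None = tl v"

definition wnd :: "'a option list \<Rightarrow> 'a list" where
  "wnd w = foldl wnd_step [] w"

definition is_vsw_alg :: "'a list set \<Rightarrow> ('s, 'a option) salg \<Rightarrow> bool" where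
  "is_vsw_alg L A \<longleftrightarrow> inj (enc A) \<and> (\<forall>w. run A w \<in> acc A \<longleftrightarrow> wnd w \<in> L)"

definition vspace :: "('s, 'a option) salg \<Rightarrow> nat \<Rightarrow> enat" where
  "vspace A n = (SUP u \<in> {u. \<forall>i \<le> length u. length (wnd (take i u)) \<le> n}. enat (space A u))"

text \<open>Since encodings are injective into bit strings, every algorithm is isomorphic to one
  whose states are bit strings; hence we range over algorithms with state type bool list.\<close>
definition V :: "'a list set \<Rightarrow> nat \<Rightarrow> enat" where
  "V L n = (INF A \<in> {A :: (bool list, 'a option) salg. is_vsw_alg L A}. vspace A n)"

end

theory Submission
  imports Defs "HOL-Library.Countable"
begin

lemma mn_class_eq: "mn_class L x = mn_class L y \<longleftrightarrow> mn_equiv L x y"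
proof
  assume "mn_class L x = mn_class L y"
  moreover have "y \<in> mn_class L y" by (simp add: mn_class_def mn_equiv_def)
  ultimately have "y \<in> mn_class L x" by simp
  then show "mn_equiv L x y" by (simp add: mn_class_def)
next
  assume a: "mn_equiv L x y"
  have "mn_equiv L x z \<longleftrightarrow> mn_equiv L y z" for z
    using a unfolding mn_equiv_def by blast
  then show "mn_class L x = mn_class L y"
    unfolding mn_class_def by blast
qed
lemma length_psi[simp]: "length (psi L w) = length w"
  by (simp add: psi_def)
lemma psi_eq_iff: "psi L x = psi L y \<longleftrightarrow>
   length x = length y \<and> (\<forall>i<length x. mn_equiv L (drop i x) (drop i y))"
proof -
  have "psi L x = psi L y \<longleftrightarrow> length x = length y \<and> (\<forall>i<length x. psi L x ! i = psi L y ! i)"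
    by (metis length_psi list_eq_iff_nth_eq)
  moreover have "psi L x ! i = psi L y ! i \<longleftrightarrow> mn_equiv L (drop i x) (drop i y)"
    if "i < length x" "length x = length y" for i
  proof -
    have "psi L x ! i = mn_class L (drop i x)" using that by (simp add: psi_def)
    moreover have "psi L y ! i = mn_class L (drop i y)" using that by (simp add: psi_def)
    ultimately show ?thesis by (simp only: mn_class_eq)
  qed
  ultimately show ?thesis by blast
qed
lemma mn_equiv_refl: "mn_equiv L x x" by (simp add: mn_equiv_def)

lemma psi_tl: "psi L (tl w) = tl (psi L w)"
proof (cases w)
  case Nil then show ?thesis by (simp add: psi_def)
next
  case (Cons a v)
  have e: "[0..<Suc m] = 0 # map Suc [0..<m]" for m :: nat
    by (simp add: map_Suc_upt upt_conv_Cons)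
  then have "[0..<Suc (length v)] = 0 # map Suc [0..<length v]" .
  then show ?thesis using Cons by (simp add: psi_def)
qed

lemma psi_snoc: assumes "psi L x = psi L y" shows "psi L (x @ [b]) = psi L (y @ [b])"
proof -
  have l: "length x = length y" and e: "\<And>i. i < length x \<Longrightarrow> mn_equiv L (drop i x) (drop i y)"
    using assms unfolding psi_eq_iff by blast+
  have m: "mn_equiv L (drop i (x @ [b])) (drop i (y @ [b]))" if "i < Suc (length x)" for i
  proof (cases "i < length x")
    case True
    have "drop i (x @ [b]) = drop i x @ [b]" "drop i (y @ [b]) = drop i y @ [b]"
      using True l by auto
    moreover have "mn_equiv L (drop i x @ [b]) (drop i y @ [b])"
      using e[OF True] unfolding mn_equiv_def by (metis append_assoc)
    ultimately show ?thesis by simp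
  next
    case False
    then have "i = length x" using that by simp
    then have "drop i (x @ [b]) = [b]" "drop i (y @ [b]) = [b]" using l by auto
    then show ?thesis by (simp add: mn_equiv_refl)
  qed
  show ?thesis unfolding psi_eq_iff
  proof (intro conjI allI impI)
    show "length (x @ [b]) = length (y @ [b])" using l by simp
  next
    fix i assume "i < length (x @ [b])"
    then show "mn_equiv L (drop i (x @ [b])) (drop i (y @ [b]))" using m by simp
  qed
qed

lemma psi_step: assumes "psi L x = psi L y" shows "psi L (wnd_step x b) = psi L (wnd_step y b)"
proof (cases b)
  case None
  have "psi L (tl x) = psi L (tl y)" using assms by (simp only: psi_tl)
  then show ?thesis using None by simp
next
  case (Some a)
  have "psi L (x @ [a]) = psi L (y @ [a])" using assms by (rule psi_snoc)
  then show ?thesis using Some by simp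
qed

lemma psi_mem: assumes "psi L x = psi L y" shows "x \<in> L \<longleftrightarrow> y \<in> L"
proof (cases "x = []")
  case True
  have "length (psi L x) = length (psi L y)" using assms by (rule arg_cong)
  then have "length y = 0" using True by simp
  then show ?thesis using True by simp
next
  case False
  then have "0 < length x" by simp
  then have "mn_equiv L (drop 0 x) (drop 0 y)" using assms unfolding psi_eq_iff by blast
  then show ?thesis unfolding mn_equiv_def by (metis append_Nil2 drop_0)
qed

lemma foldl_Some: "foldl wnd_step v (map Some z) = v @ z"
  by (induction z arbitrary: v) auto

lemma foldl_None: "foldl wnd_step v (replicate i None) = drop i v"
  by (induction i arbitrary: v) (auto simp: drop_Suc)

lemma wnd_append: "wnd (u @ c) = foldl wnd_step (wnd u) c"
  by (simp add: wnd_def)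

lemma wnd_Some: "wnd (map Some x) = x"
  by (simp add: wnd_def foldl_Some)

lemma trivial_L:
  assumes "\<forall>z. drop k z \<in> L \<longleftrightarrow> z \<in> L" "k > 0"
  shows "z \<in> L \<longleftrightarrow> [] \<in> L"
proof (induction "length z" arbitrary: z rule: less_induct)
  case less
  show ?case
  proof (cases "z = []")
    case False
    then have "length (drop k z) < length z" using assms(2) by simp
    then show ?thesis using less assms(1) by blast
  qed simp
qed

lemma len_distinguish:
  assumes "L \<noteq> {}" "L \<noteq> UNIV" "length x < length y"
    "\<forall>c. foldl wnd_step x c \<in> L \<longleftrightarrow> foldl wnd_step y c \<in> L"
  shows False
proof -
  define k where "k = length y - length x"
  define v where "v = drop (length x) y"
  have lv: "length v = k" by (simp add: k_def v_def)
  have "drop k z \<in> L \<longleftrightarrow> z \<in> L" for z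
  proof -
    have "foldl wnd_step x (replicate (length x) None @ map Some z @ replicate k None) = drop k z"
      by (simp add: foldl_None foldl_Some)
    moreover have "foldl wnd_step y (replicate (length x) None @ map Some z @ replicate k None) = z"
      using lv by (simp add: foldl_None foldl_Some v_def[symmetric])
    moreover have "foldl wnd_step x (replicate (length x) None @ map Some z @ replicate k None) \<in> L
      \<longleftrightarrow> foldl wnd_step y (replicate (length x) None @ map Some z @ replicate k None) \<in> L"
      using assms(4) by blast
    ultimately show ?thesis by simp
  qed
  moreover have "k > 0" using assms(3) k_def by simp
  ultimately have "\<And>z. z \<in> L \<longleftrightarrow> [] \<in> L"
    using trivial_L[of k L] by blast
  then show False using assms(1,2) by blast
qed

lemma distinguish:
  assumes "L \<noteq> {}" "L \<noteq> UNIV"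
    "\<forall>c. foldl wnd_step x c \<in> L \<longleftrightarrow> foldl wnd_step y c \<in> L"
  shows "psi L x = psi L y"
proof -
  have l: "length x = length y"
  proof (rule ccontr)
    assume "length x \<noteq> length y"
    then have "length x < length y \<or> length y < length x" by arith
    moreover have "\<forall>c. foldl wnd_step y c \<in> L \<longleftrightarrow> foldl wnd_step x c \<in> L" using assms(3) by blast
    ultimately show False using len_distinguish[OF assms(1,2)] assms(3) by blast
  qed
  have "mn_equiv L (drop i x) (drop i y)" for i
    unfolding mn_equiv_def
  proof
    fix z
    show "drop i x @ z \<in> L \<longleftrightarrow> drop i y @ z \<in> L"
    proof -
      have "foldl wnd_step x (replicate i None @ map Some z) = drop i x @ z"
           "foldl wnd_step y (replicate i None @ map Some z) = drop i y @ z"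
        by (simp_all add: foldl_None foldl_Some)
      then show ?thesis using assms(3) by metis
    qed
  qed
  then show ?thesis using l by (simp add: psi_eq_iff)
qed

lemma card_bl: "card {xs::bool list. length xs \<le> k} = 2^(k+1) - 1"
proof -
  have "card {xs::bool list. length xs \<le> k} = (\<Sum>i\<le>k. 2^i)"
    using card_lists_length_le[of "UNIV::bool set" k] by simp
  also have "\<dots> = 2^(k+1) - 1"
    by (induction k) auto
  finally show ?thesis .
qed

lemma finite_bl: "finite {xs::bool list. length xs \<le> k}"
  using finite_lists_length_le[of "UNIV::bool set" k] by simp

lemma log2floor_bounds: assumes "m > 0"
  shows "2^(log2floor m) \<le> m \<and> m < 2^(log2floor m + 1)"
proof -
  have "log 2 (real m) \<ge> 0" using assms by simp
  then have "\<lfloor>log 2 (real m)\<rfloor> = int (log2floor m)"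
    by (simp add: log2floor_def)
  then show ?thesis
    using floor_log_nat_eq_powr_iff[of 2 m "log2floor m"] assms by simp
qed


lemma space_ge: "length (enc A (run A w)) \<le> space A w"
proof -
  have f: "finite {length (enc A (run A (take i w))) | i. i \<le> length w}"
    by (rule finite_image_set) simp
  have "length (enc A (run A (take (length w) w))) \<in> {length (enc A (run A (take i w))) | i. i \<le> length w}"
    by blast
  then show ?thesis unfolding space_def using Max_ge[OF f] by simp
qed

lemma space_le:
  assumes "\<And>i. i \<le> length w \<Longrightarrow> length (enc A (run A (take i w))) \<le> k"
  shows "space A w \<le> k"
proof -
  have f: "finite {length (enc A (run A (take i w))) | i. i \<le> length w}"
    by (rule finite_image_set) simp
  have ne: "{length (enc A (run A (take i w))) | i. i \<le> length w} \<noteq> {}" by blast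
  show ?thesis unfolding space_def using Max_le_iff[OF f ne] assms by blast
qed

lemma finite_W: "finite {w::('a::finite) list. length w \<le> n}"
  using finite_lists_length_le[of "UNIV::'a set" n] by simp

lemma run_append: "run A (u @ c) = foldl (delta A) (run A u) c"
  by (simp add: run_def)

lemma lower:
  fixes L :: "('a::finite) list set" and A :: "('s, 'a option) salg"
  assumes "L \<noteq> {}" "L \<noteq> UNIV" "is_vsw_alg L A"
  shows "enat (log2floor (card (psi L ` {w. length w \<le> n}))) \<le> vspace A n"
proof -
  define Wn where "Wn = {w::'a list. length w \<le> n}"
  define m where "m = card (psi L ` Wn)"
  define k where "k = log2floor m"
  define F where "F w = enc A (run A (map Some w))" for w
  have fW: "finite Wn" unfolding Wn_def by (rule finite_W)
  have injE: "inj (enc A)" and corr: "\<And>w. run A w \<in> acc A \<longleftrightarrow> wnd w \<in> L"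
    using assms(3) unfolding is_vsw_alg_def by auto
  have Finj: "psi L x = psi L y" if "F x = F y" for x y
  proof -
    have r: "run A (map Some x) = run A (map Some y)"
      using that injE unfolding F_def inj_def by blast
    have "foldl wnd_step x c \<in> L \<longleftrightarrow> foldl wnd_step y c \<in> L" for c
    proof -
      have "foldl wnd_step x c = wnd (map Some x @ c)" by (simp add: wnd_append wnd_Some)
      moreover have "foldl wnd_step y c = wnd (map Some y @ c)" by (simp add: wnd_append wnd_Some)
      moreover have "run A (map Some x @ c) = run A (map Some y @ c)"
        using r by (simp add: run_append)
      ultimately show ?thesis using corr by metis
    qed
    then show ?thesis using distinguish[OF assms(1,2)] by blast
  qed
  define g where "g s = psi L (SOME w. w \<in> Wn \<and> F w = s)" for s
  have "psi L ` Wn \<subseteq> g ` (F ` Wn)"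
  proof
    fix p assume "p \<in> psi L ` Wn"
    then obtain w where w: "w \<in> Wn" "p = psi L w" by blast
    have "\<exists>w'. w' \<in> Wn \<and> F w' = F w" using w by blast
    then have "(SOME w'. w' \<in> Wn \<and> F w' = F w) \<in> Wn \<and> F (SOME w'. w' \<in> Wn \<and> F w' = F w) = F w"
      by (rule someI_ex)
    then have "g (F w) = p" unfolding g_def using Finj w by metis
    then show "p \<in> g ` (F ` Wn)" using w by blast
  qed
  then have "m \<le> card (g ` (F ` Wn))" unfolding m_def using fW by (intro card_mono) auto
  also have "\<dots> \<le> card (F ` Wn)" by (rule card_image_le) (use fW in auto)
  finally have mF: "m \<le> card (F ` Wn)" .
  have "[] \<in> Wn" unfolding Wn_def by simp
  then have "m > 0" unfolding m_def using fW by (auto simp: card_gt_0_iff)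
  then have pk: "2^k \<le> m" using log2floor_bounds k_def by blast
  have "\<exists>w\<in>Wn. k \<le> length (F w)"
  proof (rule ccontr)
    assume "\<not> ?thesis"
    then have lt: "\<forall>w\<in>Wn. length (F w) < k" by auto
    then have "k > 0" using \<open>[] \<in> Wn\<close> by fastforce
    have "F ` Wn \<subseteq> {xs. length xs \<le> k - 1}" using lt by fastforce
    then have "card (F ` Wn) \<le> card {xs::bool list. length xs \<le> k - 1}"
      by (intro card_mono finite_bl)
    also have "\<dots> = 2^k - 1" using card_bl[of "k-1"] \<open>k > 0\<close> by simp
    finally show False using mF pk
      by (metis One_nat_def diff_less dual_order.trans leD less_numeral_extra(1) linorder_not_le nat_zero_less_power_iff pos2)
  qed
  then obtain w where w: "w \<in> Wn" "k \<le> length (F w)" by blast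
  define u where "u = map Some w"
  have "u \<in> {u. \<forall>i \<le> length u. length (wnd (take i u)) \<le> n}"
    using w(1) unfolding u_def Wn_def by (auto simp: take_map wnd_Some)
  moreover have "enat k \<le> enat (space A u)"
    using space_ge[of A u] w(2) unfolding F_def u_def by simp
  ultimately have "enat k \<le> vspace A n" unfolding vspace_def by (rule SUP_upper2)
  then show ?thesis unfolding k_def m_def Wn_def .
qed


lemma upper:
  fixes L :: "('a::finite) list set"
  shows "\<exists>A :: (bool list, 'a option) salg. is_vsw_alg L A \<and>
     vspace A n \<le> enat (log2floor (card (psi L ` {w. length w \<le> n})))"
proof -
  define Pn where "Pn = psi L ` {w::'a list. length w \<le> n}"
  define m where "m = card Pn"
  define k where "k = log2floor m"
  have fP: "finite Pn" unfolding Pn_def using finite_W by blast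
  have "psi L [] \<in> Pn" unfolding Pn_def by force
  then have "m > 0" unfolding m_def using fP by (auto simp: card_gt_0_iff)
  then have "m < 2^(k+1)" using log2floor_bounds k_def by blast
  then have "card Pn \<le> card {xs::bool list. length xs \<le> k}" unfolding m_def card_bl by simp
  then obtain g where g: "g ` Pn \<subseteq> {xs::bool list. length xs \<le> k}" "inj_on g Pn"
    using card_le_inj[OF fP finite_bl] by blast
  define rep where "rep p = (SOME w. psi L w = p)" for p
  have rep: "psi L (rep p) = p" if "p \<in> range (psi L)" for p
    unfolding rep_def using that by (metis (mono_tags, lifting) rangeE someI_ex)
  define code where "code p = (if p \<in> Pn then g p else replicate (Suc k + to_nat (rep p)) True)" for p
  have code_inj: "p = q" if "p \<in> range (psi L)" "q \<in> range (psi L)" "code p = code q" for p q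
  proof (cases "p \<in> Pn")
    case True
    show ?thesis
    proof (cases "q \<in> Pn")
      case True
      then show ?thesis using \<open>p \<in> Pn\<close> g(2) that(3) unfolding code_def inj_on_def by simp
    next
      case False
      have "length (code p) \<le> k" using True g(1) unfolding code_def by auto
      moreover have "length (code q) > k" using False unfolding code_def by simp
      ultimately show ?thesis using that(3) by simp
    qed
  next
    case False
    show ?thesis
    proof (cases "q \<in> Pn")
      case True
      have "length (code q) \<le> k" using True g(1) unfolding code_def by auto
      moreover have "length (code p) > k" using False unfolding code_def by simp
      ultimately show ?thesis using that(3) by simp
    next
      case qF: False
      have "length (code p) = length (code q)" using that(3) by simp
      then have "to_nat (rep p) = to_nat (rep q)" using False qF unfolding code_def by simp
      then have "rep p = rep q" by simp
      then show ?thesis using rep that(1,2) by metis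
    qed
  qed
  define dec where "dec s = (SOME w. code (psi L w) = s)" for s
  have dec: "psi L (dec (code (psi L w))) = psi L w" for w
  proof -
    have "code (psi L (dec (code (psi L w)))) = code (psi L w)"
      unfolding dec_def by (rule someI_ex) blast
    then show ?thesis using code_inj by blast
  qed
  define A :: "(bool list, 'a option) salg" where
    "A = \<lparr>init = code (psi L []), delta = (\<lambda>s b. code (psi L (wnd_step (dec s) b))),
          acc = {s. dec s \<in> L}, enc = id\<rparr>"
  have runA: "run A u = code (psi L (wnd u))" for u
  proof (induction u rule: rev_induct)
    case Nil
    then show ?case by (simp add: A_def run_def wnd_def)
  next
    case (snoc b u)
    have "run A (u @ [b]) = code (psi L (wnd_step (dec (run A u)) b))"
      by (simp add: run_append A_def)
    also have "\<dots> = code (psi L (wnd_step (wnd u) b))"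
      using snoc psi_step[OF dec] by simp
    also have "wnd_step (wnd u) b = wnd (u @ [b])" by (simp add: wnd_append)
    finally show ?case .
  qed
  have "is_vsw_alg L A"
    unfolding is_vsw_alg_def
  proof (intro conjI allI)
    show "inj (enc A)" by (simp add: A_def)
  next
    fix w
    have "run A w \<in> acc A \<longleftrightarrow> dec (code (psi L (wnd w))) \<in> L"
      by (simp add: runA) (simp add: A_def)
    also have "\<dots> \<longleftrightarrow> wnd w \<in> L" using psi_mem[OF dec] by blast
    finally show "run A w \<in> acc A \<longleftrightarrow> wnd w \<in> L" .
  qed
  moreover have "vspace A n \<le> enat k"
    unfolding vspace_def
  proof (rule SUP_least)
    fix u :: "'a option list" assume "u \<in> {u. \<forall>i \<le> length u. length (wnd (take i u)) \<le> n}"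
    then have u: "\<And>i. i \<le> length u \<Longrightarrow> length (wnd (take i u)) \<le> n" by blast
    have "space A u \<le> k"
    proof (rule space_le)
      fix i assume "i \<le> length u"
      then have "psi L (wnd (take i u)) \<in> Pn" unfolding Pn_def using u by blast
      then have "length (code (psi L (wnd (take i u)))) \<le> k" using g(1) unfolding code_def by auto
      then show "length (enc A (run A (take i u))) \<le> k" by (simp add: runA) (simp add: A_def)
    qed
    then show "enat (space A u) \<le> enat k" by simp
  qed
  ultimately show ?thesis unfolding k_def m_def Pn_def by blast
qed

theorem theorem4p1:
  fixes L :: "('a::finite) list set" and n :: nat
  assumes "L \<noteq> {}" and "L \<noteq> UNIV"
  shows "V L n = enat (log2floor (card (psi L ` {w. length w \<le> n})))"
proof (rule antisym)
  obtain A :: "(bool list, 'a option) salg" where A: "is_vsw_alg L A"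
    "vspace A n \<le> enat (log2floor (card (psi L ` {w. length w \<le> n})))"
    using upper[of L n] by blast
  show "V L n \<le> enat (log2floor (card (psi L ` {w. length w \<le> n})))"
    unfolding V_def by (rule INF_lower2[of A]) (use A in auto)
next
  show "enat (log2floor (card (psi L ` {w. length w \<le> n}))) \<le> V L n"
    unfolding V_def by (rule INF_greatest) (use lower[OF assms] in auto)
qed

end
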